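(* Let $S$ be a semigroup. Every strongly irreducible semiprime interior ideal of $S$ is a strongly prime interior ideal of $S$.
   Context: A subsemigroup $I$ of $S$ (non-empty with $II\subseteq I$) is an interior ideal if $SIS\subseteq I$. For subsets $A,B$, $AB=\{ab:a\in A,b\in B\}$ and $A^2=AA$. An interior ideal $I$ is semiprime if for every interior ideal $A$ of $S$, $A^{2}\subseteq I$ implies $A\subseteq I$. It is strongly irreducible if for all interior ideals $I_1,I_2$ of $S$, $I_1\cap I_2\subseteq I$ implies $I_1\subseteq I$ or $I_2\subseteq I$. It is strongly prime if for all interior ideals $I_1,I_2$ of $S$, $I_1I_2\cap I_2I_1\subseteq I$ implies $I_1\subseteq I$ or $I_2\subseteq I$. *)

theory Defs
  imports Main
begin

text \<open>Semigroup S is modelled as the type 'a of class semigroup_mult (S = UNIV).\<close>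

definition setmult :: "'a::semigroup_mult set \<Rightarrow> 'a set \<Rightarrow> 'a set" (infixl "\<cdot>\<^sub>s" 70) where
  "A \<cdot>\<^sub>s B = {a * b | a b. a \<in> A \<and> b \<in> B}"

definition subsemigroup :: "'a::semigroup_mult set \<Rightarrow> bool" where
  "subsemigroup I \<longleftrightarrow> I \<noteq> {} \<and> I \<cdot>\<^sub>s I \<subseteq> I"

definition interior_ideal :: "'a::semigroup_mult set \<Rightarrow> bool" where
  "interior_ideal I \<longleftrightarrow> subsemigroup I \<and> (UNIV \<cdot>\<^sub>s I) \<cdot>\<^sub>s UNIV \<subseteq> I"

definition semiprime_interior_ideal :: "'a::semigroup_mult set \<Rightarrow> bool" where
  "semiprime_interior_ideal I \<longleftrightarrow> interior_ideal I \<and>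
     (\<forall>A. interior_ideal A \<longrightarrow> A \<cdot>\<^sub>s A \<subseteq> I \<longrightarrow> A \<subseteq> I)"

definition strongly_irreducible_interior_ideal :: "'a::semigroup_mult set \<Rightarrow> bool" where
  "strongly_irreducible_interior_ideal I \<longleftrightarrow> interior_ideal I \<and>
     (\<forall>I1 I2. interior_ideal I1 \<longrightarrow> interior_ideal I2 \<longrightarrow>
        I1 \<inter> I2 \<subseteq> I \<longrightarrow> I1 \<subseteq> I \<or> I2 \<subseteq> I)"

definition strongly_prime_interior_ideal :: "'a::semigroup_mult set \<Rightarrow> bool" where
  "strongly_prime_interior_ideal I \<longleftrightarrow> interior_ideal I \<and>
     (\<forall>I1 I2. interior_ideal I1 \<longrightarrow> interior_ideal I2 \<longrightarrow>
        (I1 \<cdot>\<^sub>s I2) \<inter> (I2 \<cdot>\<^sub>s I1) \<subseteq> I \<longrightarrow> I1 \<subseteq> I \<or> I2 \<subseteq> I)"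

end

theory Submission
  imports Defs
begin

lemma inter_interior:
  fixes I1 I2 :: "'a::semigroup_mult set"
  assumes "interior_ideal I1" "interior_ideal I2"
  shows "interior_ideal (I1 \<inter> I2)"
proof -
  from assms obtain a b where a: "a \<in> I1" and b: "b \<in> I2"
    unfolding interior_ideal_def subsemigroup_def by blast
  have S1: "\<And>s x t. x \<in> I1 \<Longrightarrow> s * x * t \<in> I1"
    using assms(1) unfolding interior_ideal_def setmult_def by blast
  have S2: "\<And>s x t. x \<in> I2 \<Longrightarrow> s * x * t \<in> I2"
    using assms(2) unfolding interior_ideal_def setmult_def by blast
  have M1: "\<And>x y. x \<in> I1 \<Longrightarrow> y \<in> I1 \<Longrightarrow> x * y \<in> I1"
    using assms(1) unfolding interior_ideal_def subsemigroup_def setmult_def by blast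
  have M2: "\<And>x y. x \<in> I2 \<Longrightarrow> y \<in> I2 \<Longrightarrow> x * y \<in> I2"
    using assms(2) unfolding interior_ideal_def subsemigroup_def setmult_def by blast
  have "b * a * (b * a * b) \<in> I1" using S1 a by blast
  moreover have "(b * a) * b * (a * b) \<in> I2" using S2 b by blast
  moreover have "b * a * (b * a * b) = (b * a) * b * (a * b)" by (simp add: mult.assoc)
  ultimately have ne: "I1 \<inter> I2 \<noteq> {}" by auto
  show ?thesis unfolding interior_ideal_def subsemigroup_def
    using ne M1 M2 S1 S2 by (auto simp: setmult_def)
qed

theorem mainTheorem10:
  fixes I :: "'a::semigroup_mult set"
  assumes "strongly_irreducible_interior_ideal I"
    and "semiprime_interior_ideal I"
  shows "strongly_prime_interior_ideal I"
  unfolding strongly_prime_interior_ideal_def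
proof (intro conjI allI impI)
  show "interior_ideal I" using assms(2) semiprime_interior_ideal_def by blast
  fix I1 I2 :: "'a set"
  assume h1: "interior_ideal I1" and h2: "interior_ideal I2"
    and h: "(I1 \<cdot>\<^sub>s I2) \<inter> (I2 \<cdot>\<^sub>s I1) \<subseteq> I"
  have J: "interior_ideal (I1 \<inter> I2)" using inter_interior h1 h2 by blast
  have "(I1 \<inter> I2) \<cdot>\<^sub>s (I1 \<inter> I2) \<subseteq> (I1 \<cdot>\<^sub>s I2) \<inter> (I2 \<cdot>\<^sub>s I1)"
    by (auto simp: setmult_def)
  with h have "(I1 \<inter> I2) \<cdot>\<^sub>s (I1 \<inter> I2) \<subseteq> I" by blast
  with J assms(2) have "I1 \<inter> I2 \<subseteq> I" unfolding semiprime_interior_ideal_def by blast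
  with h1 h2 assms(1) show "I1 \<subseteq> I \<or> I2 \<subseteq> I"
    unfolding strongly_irreducible_interior_ideal_def by blast
qed

end
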